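(* In the infinite-color urn model with parameters $\ell,s$ and initial cumulative counts $m_1,\dots,m_s$, let $k\ge s$, $p=k-s+1$, and $n\ge \ell p$. Then $$M_k(n)\sim \mathrm{Pimm}_\ell\big(1,\;m_s+\ell p+(k-s),\;n-\ell p\big).$$ Furthermore, conditionally on $M_{k+1}(n)$, $$M_k(n)\sim\begin{cases}\mathrm{Pclas}\big(m_{k+1}-m_k,\;m_k,\;M_{k+1}(n)-m_{k+1}\big)&\text{if }1\le k<s,\\ \mathrm{Pclas}\big(1,\;m_s+\ell p+(k-s),\;M_{k+1}(n)-m_s-(\ell+1)p\big)&\text{if }k\ge s\ (\text{and } n\ge\ell p).\end{cases}$$
   Context: Infinite-color urn model: at time $0$ the urn contains balls of colors $1,\dots,s$ (at least one of each). Fix an integer $\ell\ge1$. At the $n$th step a ball is drawn uniformly at random and returned with one additional ball of the same color; if $n$ is a multiple of $\ell$, one ball of the new color $s+n/\ell$ is added after the $n$th draw. $M_k(n)$ is the number of balls with colors in $\{1,\dots,k\}$ after step $n$ is completed, and $m_k=M_k(0)$ (with $m_1\ge1$, $m_{k+1}-m_k\ge1$ for $k<s$). $\mathrm{Pclas}(b,w,m)$ denotes the distribution of the number of white balls in a classical Pólya urn (draw a uniformly random ball, return it with one more of the same color) after $m$ draws, starting with $b$ black and $w$ white balls. $\mathrm{Pimm}_\ell(b,w,m)$ denotes the distribution of the number of white balls after $m$ steps of the following urn started with $b$ black and $w$ white balls: at step $j$ a uniformly random ball is drawn and returned with one more of the same color, and if $j$ is a multiple of $\ell$ a black ball is added after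 this draw. *)

theory Defs
  imports "HOL-Probability.Probability"
begin

(* ---------- Infinite-color urn ----------
   A state is a list of counts: entry i (0-based) is the number of balls of colour i+1. *)

definition balls_mset :: "nat list \<Rightarrow> nat multiset" where
  "balls_mset xs = (\<Sum>i<length xs. replicate_mset (xs ! i) i)"

definition urn_step :: "nat \<Rightarrow> nat \<Rightarrow> nat list \<Rightarrow> nat list pmf" where
  "urn_step l n xs =
     map_pmf (\<lambda>i. let ys = xs[i := xs ! i + 1] in if l dvd n then ys @ [1] else ys)
             (pmf_of_multiset (balls_mset xs))"

fun urn :: "nat \<Rightarrow> nat list \<Rightarrow> nat \<Rightarrow> nat list pmf" where
  "urn l c0 0 = return_pmf c0"
| "urn l c0 (Suc n) = bind_pmf (urn l c0 n) (urn_step l (Suc n))"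

definition Mk :: "nat \<Rightarrow> nat list \<Rightarrow> nat" where
  "Mk k xs = sum_list (take k xs)"

definition mcum :: "nat list \<Rightarrow> nat \<Rightarrow> nat" where
  "mcum c0 k = sum_list (take k c0)"

(* ---------- Two-colour urns ----------
   state (b, w) = (black, white); imm j says whether a black ball is added after step j *)
definition two_step :: "(nat \<Rightarrow> bool) \<Rightarrow> nat \<Rightarrow> nat \<times> nat \<Rightarrow> (nat \<times> nat) pmf" where
  "two_step imm j bw =
     map_pmf (\<lambda>white. let (b, w) = bw;
                           (b', w') = (if white then (b, w + 1) else (b + 1, w))
                       in if imm j then (b' + 1, w') else (b', w'))
             (pmf_of_multiset (replicate_mset (fst bw) False + replicate_mset (snd bw) True))"

fun two_urn :: "(nat \<Rightarrow> bool) \<Rightarrow> nat \<Rightarrow> nat \<Rightarrow> nat \<Rightarrow> (nat \<times> nat) pmf" where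
  "two_urn imm b w 0 = return_pmf (b, w)"
| "two_urn imm b w (Suc m) = bind_pmf (two_urn imm b w m) (two_step imm (Suc m))"

definition Pclas :: "nat \<Rightarrow> nat \<Rightarrow> nat \<Rightarrow> nat pmf" where
  "Pclas b w m = map_pmf snd (two_urn (\<lambda>_. False) b w m)"

definition Pimm :: "nat \<Rightarrow> nat \<Rightarrow> nat \<Rightarrow> nat \<Rightarrow> nat pmf" where
  "Pimm l b w m = map_pmf snd (two_urn (\<lambda>j. l dvd j) b w m)"

(* "conditionally on X, Y has law D(X)": the joint law of (X,Y) is X's law followed by D *)
definition cond_law :: "'a pmf \<Rightarrow> ('a \<Rightarrow> 'b) \<Rightarrow> ('a \<Rightarrow> 'c) \<Rightarrow> ('b \<Rightarrow> 'c pmf) \<Rightarrow> bool" where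
  "cond_law P X Y D \<longleftrightarrow>
     map_pmf (\<lambda>\<omega>. (X \<omega>, Y \<omega>)) P = bind_pmf (map_pmf X P) (\<lambda>x. map_pmf (Pair x) (D x))"

end

theory Submission
  imports Defs
begin


lemma pmf_map_multiset:
  assumes "X \<noteq> {#}"
  shows "map_pmf f (pmf_of_multiset X) = pmf_of_multiset (image_mset f X)"
proof (rule pmf_eqI)
  fix x
  have ne: "image_mset f X \<noteq> {#}" using assms by simp
  have "pmf (map_pmf f (pmf_of_multiset X)) x = measure (pmf_of_multiset X) (f -` {x})"
    by (simp add: pmf_map)
  also have "\<dots> = measure (pmf_of_multiset X) (f -` {x} \<inter> set_mset X)"
    by (metis measure_Int_set_pmf set_pmf_of_multiset[OF assms])
  also have "\<dots> = (\<Sum>a\<in>f -` {x} \<inter> set_mset X. pmf (pmf_of_multiset X) a)"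
    by (rule measure_measure_pmf_finite) simp
  also have "\<dots> = (\<Sum>a\<in>f -` {x} \<inter> set_mset X. real (count X a)) / size X"
    using assms by (simp add: sum_divide_distrib)
  also have "\<dots> = count (image_mset f X) x / size (image_mset f X)"
    by (simp add: count_image_mset)
  also have "\<dots> = pmf (pmf_of_multiset (image_mset f X)) x" using ne by simp
  finally show "pmf (map_pmf f (pmf_of_multiset X)) x = pmf (pmf_of_multiset (image_mset f X)) x" .
qed

lemma count_image_size_filter: "count (image_mset f X) y = size (filter_mset (\<lambda>x. f x = y) X)"
  by (induction X) auto

lemma pmf_of_multiset_split:
  assumes "X \<noteq> {#}"
  shows "pmf_of_multiset X = bind_pmf (pmf_of_multiset (image_mset f X))
           (\<lambda>y. pmf_of_multiset (filter_mset (\<lambda>x. f x = y) X))"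
proof (rule pmf_eqI)
  fix x
  let ?Y = "image_mset f X"
  let ?F = "\<lambda>y. filter_mset (\<lambda>x. f x = y) X"
  have neY: "?Y \<noteq> {#}" using assms by simp
  have "pmf (bind_pmf (pmf_of_multiset ?Y) (\<lambda>y. pmf_of_multiset (?F y))) x
      = (\<integral>y. pmf (pmf_of_multiset (?F y)) x \<partial>measure_pmf (pmf_of_multiset ?Y))" by (rule pmf_bind)
  also have "\<dots> = (\<Sum>y\<in>{f x}. pmf (pmf_of_multiset (?F y)) x * pmf (pmf_of_multiset ?Y) y)"
  proof (rule integral_measure_pmf_real)
    fix y assume y: "y \<in> set_pmf (pmf_of_multiset ?Y)" and nz: "pmf (pmf_of_multiset (?F y)) x \<noteq> 0"
    from y neY have "y \<in># ?Y" by simp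
    then have "count ?Y y > 0" by simp
    moreover have "size (?F y) = count ?Y y" by (simp only: count_image_size_filter)
    ultimately have "?F y \<noteq> {#}" by auto
    with nz have "count (?F y) x \<noteq> 0" by simp
    then show "y \<in> {f x}" by (auto split: if_splits)
  qed simp
  also have "\<dots> = real (count X x) / size X"
  proof (cases "?F (f x) = {#}")
    case True
    then have "count ?Y (f x) = 0" by (simp add: count_image_size_filter)
    moreover have "count X x = 0"
    proof -
      have "count (?F (f x)) x = count X x" by simp
      then show ?thesis using True by simp
    qed
    ultimately show ?thesis using neY by simp
  next
    case False
    have "count (?F (f x)) x = count X x" by simp
    moreover have "count ?Y (f x) = size (?F (f x))" by (simp add: count_image_size_filter)
    moreover have "size (?F (f x)) > 0"
    proof -
      obtain z Z where "?F (f x) = add_mset z Z" using False by (cases "?F (f x)") auto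
      then show ?thesis by simp
    qed
    moreover have "size X = size ?Y" by simp
    ultimately show ?thesis using False neY by (simp add: field_simps)
  qed
  also have "\<dots> = pmf (pmf_of_multiset X) x" using assms by simp
  finally show "pmf (pmf_of_multiset X) x = pmf (bind_pmf (pmf_of_multiset ?Y) (\<lambda>y. pmf_of_multiset (?F y))) x" by simp
qed

lemma pmf_of_multiset_replicate: "n > 0 \<Longrightarrow> pmf_of_multiset (replicate_mset n x) = return_pmf x"
  by (rule pmf_eqI) (simp add: indicator_def)

lemma balls_mset_Nil[simp]: "balls_mset [] = {#}"
  by (simp add: balls_mset_def)

lemma balls_mset_snoc: "balls_mset (xs @ [x]) = balls_mset xs + replicate_mset x (length xs)"
proof -
  have "(\<Sum>i<length xs. replicate_mset ((xs@[x])!i) i) = (\<Sum>i<length xs. replicate_mset (xs!i) i)"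
    by (rule sum.cong) (auto simp: nth_append)
  then show ?thesis by (simp add: balls_mset_def)
qed

lemma size_balls: "size (balls_mset xs) = sum_list xs"
  by (induction xs rule: rev_induct) (auto simp: balls_mset_snoc)

lemma in_balls: "i \<in># balls_mset xs \<Longrightarrow> i < length xs"
  by (induction xs rule: rev_induct) (auto simp: balls_mset_snoc split: if_splits)

lemma balls_ne: "sum_list xs > 0 \<Longrightarrow> balls_mset xs \<noteq> {#}"
proof
  assume a: "0 < sum_list xs" "balls_mset xs = {#}"
  have "sum_list xs = size (balls_mset xs)" by (rule size_balls[symmetric])
  also have "\<dots> = 0" using a(2) by simp
  finally show False using a(1) by linarith
qed

lemma Mk_Nil[simp]: "Mk k [] = 0" by (simp add: Mk_def)
lemma Mk_0[simp]: "Mk 0 xs = 0" by (simp add: Mk_def)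
lemma Mk_Cons[simp]: "Mk (Suc k) (x # xs) = x + Mk k xs" by (simp add: Mk_def)

lemma Mk_snoc: "Mk k (xs @ [x]) = Mk k xs + (if length xs < k then x else 0)"
proof (induction xs arbitrary: k)
  case Nil then show ?case by (cases k) auto
next
  case (Cons y ys) then show ?case by (cases k) auto
qed

lemma Mk_all: "length xs \<le> k \<Longrightarrow> Mk k xs = sum_list xs"
  by (simp add: Mk_def)

lemma Mk_mono: "k \<le> k' \<Longrightarrow> Mk k xs \<le> Mk k' xs"
proof (induction xs arbitrary: k k')
  case Nil then show ?case by simp
next
  case (Cons y ys) then show ?case by (cases k; cases k') auto
qed

lemma Mk_le_sum: "Mk k xs \<le> sum_list xs"
  by (metis Mk_all Mk_mono nat_le_linear order_refl)

lemma Mk_update: "i < length xs \<Longrightarrow> Mk k (xs[i := Suc (xs!i)]) = Mk k xs + (if i < k then 1 else 0)"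
proof (induction xs arbitrary: i k)
  case Nil then show ?case by simp
next
  case (Cons y ys) then show ?case by (cases k; cases i) auto
qed


lemma sum_update: "i < length (xs::nat list) \<Longrightarrow> sum_list (xs[i := Suc (xs!i)]) = sum_list xs + 1"
  using Mk_update[of i xs "length xs"] by (simp add: Mk_all)

definition c3 :: "nat \<Rightarrow> nat \<Rightarrow> nat" where
  "c3 k i = (if i < k then 0 else if i < Suc k then 1 else 2)"

lemma image_c3: "image_mset (c3 k) (balls_mset xs) =
   replicate_mset (Mk k xs) 0 + replicate_mset (Mk (Suc k) xs - Mk k xs) 1
   + replicate_mset (sum_list xs - Mk (Suc k) xs) 2"
proof (induction xs rule: rev_induct)
  case Nil
  then show ?case by (simp add: Mk_def)
next
  case (snoc x xs)
  have a: "Mk k xs \<le> Mk (Suc k) xs" by (rule Mk_mono) simp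
  have b: "Mk (Suc k) xs \<le> sum_list xs" by (rule Mk_le_sum)
  show ?case using snoc a b
    by (auto simp: balls_mset_snoc Mk_snoc c3_def multiset_eq_iff)
qed

lemma image_c2: "image_mset (\<lambda>i. i < k) (balls_mset xs) =
   replicate_mset (Mk k xs) True + replicate_mset (sum_list xs - Mk k xs) False"
proof (induction xs rule: rev_induct)
  case Nil
  then show ?case by (simp add: Mk_def)
next
  case (snoc x xs)
  have b: "Mk k xs \<le> sum_list xs" by (rule Mk_le_sum)
  show ?case using snoc b
    by (auto simp: balls_mset_snoc Mk_snoc multiset_eq_iff)
qed

definition new_st :: "nat \<Rightarrow> nat \<Rightarrow> nat list \<Rightarrow> nat \<Rightarrow> nat list" where
  "new_st l n xs i = (let ys = xs[i := Suc (xs ! i)] in if l dvd n then ys @ [1] else ys)"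

lemma urn_step_alt: "urn_step l n xs = map_pmf (new_st l n xs) (pmf_of_multiset (balls_mset xs))"
  unfolding urn_step_def by (rule map_pmf_cong) (simp_all add: new_st_def)

lemma new_st_len: "length (new_st l n xs i) = length xs + (if l dvd n then 1 else 0)"
  by (simp add: new_st_def Let_def)

lemma new_st_sum: "i < length xs \<Longrightarrow> sum_list (new_st l n xs i) = sum_list xs + 1 + (if l dvd n then 1 else 0)"
  by (simp add: new_st_def Let_def sum_update)

lemma new_st_Mk: "i < length xs \<Longrightarrow> k \<le> length xs \<Longrightarrow> Mk k (new_st l n xs i) = Mk k xs + (if i < k then 1 else 0)"
  by (simp add: new_st_def Let_def Mk_snoc Mk_update)

lemma new_st_Mk_mono: "i < length xs \<Longrightarrow> Mk k xs \<le> Mk k (new_st l n xs i)"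
  by (simp add: new_st_def Let_def Mk_snoc Mk_update)

lemma set_urn_step: "sum_list ys > 0 \<Longrightarrow> xs \<in> set_pmf (urn_step l n ys) \<Longrightarrow> \<exists>i<length ys. xs = new_st l n ys i"
  by (auto simp: urn_step_alt balls_ne dest: in_balls)

lemma div_Suc': "Suc n div l = n div l + (if l dvd Suc n then 1 else 0)"
  using div_Suc[of n l] by (auto simp: dvd_eq_mod_eq_0)

lemma urn_inv:
  assumes "sum_list c0 > 0"
  shows "xs \<in> set_pmf (urn l c0 n) \<Longrightarrow> length xs = length c0 + n div l \<and> sum_list xs = sum_list c0 + n + n div l"
proof (induction n arbitrary: xs)
  case 0 then show ?case by simp
next
  case (Suc n)
  from Suc.prems obtain ys where ys: "ys \<in> set_pmf (urn l c0 n)" and xs: "xs \<in> set_pmf (urn_step l (Suc n) ys)"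
    by auto
  from Suc.IH[OF ys] assms have "sum_list ys > 0" by simp
  with xs obtain i where "i < length ys" "xs = new_st l (Suc n) ys i" using set_urn_step by blast
  with Suc.IH[OF ys] show ?case by (simp add: new_st_len new_st_sum div_Suc')
qed

lemma urn_pos: "sum_list c0 > 0 \<Longrightarrow> xs \<in> set_pmf (urn l c0 n) \<Longrightarrow> sum_list xs > 0"
  using urn_inv by fastforce

lemma urn_mono:
  assumes "sum_list c0 > 0"
  shows "n0 \<le> n \<Longrightarrow> xs \<in> set_pmf (urn l c0 n) \<Longrightarrow> \<exists>ys\<in>set_pmf (urn l c0 n0). \<forall>j. Mk j ys \<le> Mk j xs"
proof (induction n arbitrary: xs)
  case 0 then show ?case by auto
next
  case (Suc n)
  show ?case
  proof (cases "n0 = Suc n")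
    case True then show ?thesis using Suc.prems by auto
  next
    case False
    from Suc.prems obtain ys where ys: "ys \<in> set_pmf (urn l c0 n)" and xs: "xs \<in> set_pmf (urn_step l (Suc n) ys)"
      by auto
    have "sum_list ys > 0" using urn_pos[OF assms ys] .
    with xs obtain i where i: "i < length ys" "xs = new_st l (Suc n) ys i" using set_urn_step by blast
    from False Suc.prems have "n0 \<le> n" by simp
    from Suc.IH[OF this ys] obtain zs where "zs \<in> set_pmf (urn l c0 n0)" "\<forall>j. Mk j zs \<le> Mk j ys" by blast
    then show ?thesis using i new_st_Mk_mono by (meson order_trans)
  qed
qed

lemma urn_last:
  assumes "sum_list c0 > 0" "l dvd Suc m" "xs \<in> set_pmf (urn l c0 (Suc m))"
  shows "\<exists>zs. xs = zs @ [1]"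
proof -
  from assms(3) obtain ys where ys: "ys \<in> set_pmf (urn l c0 m)" and xs: "xs \<in> set_pmf (urn_step l (Suc m) ys)"
    by auto
  have "sum_list ys > 0" using urn_pos[OF assms(1) ys] .
  with xs obtain i where i: "i < length ys" "xs = new_st l (Suc m) ys i" using set_urn_step by blast
  then show ?thesis using assms(2) by (simp add: new_st_def Let_def)
qed



definition g1 :: "nat \<Rightarrow> nat list \<Rightarrow> nat \<times> nat" where
  "g1 k xs = (sum_list xs - Mk k xs, Mk k xs)"

lemma TR1:
  assumes k: "k \<le> length xs" and pos: "sum_list xs > 0" and imm: "imm j = (l dvd n)"
  shows "map_pmf (g1 k) (urn_step l n xs) = two_step imm j (g1 k xs)"
proof -
  let ?B = "balls_mset xs"
  let ?b = "sum_list xs - Mk k xs" and ?w = "Mk k xs"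
  define h where "h = (\<lambda>white::bool. let (b', w') = (if white then (?b, ?w + 1) else (?b + 1, ?w))
                                      in if imm j then (b' + 1, w') else (b', w'))"
  have ne: "?B \<noteq> {#}" using balls_ne[OF pos] .
  have le: "Mk k xs \<le> sum_list xs" by (rule Mk_le_sum)
  have "map_pmf (g1 k) (urn_step l n xs) = map_pmf (\<lambda>i. g1 k (new_st l n xs i)) (pmf_of_multiset ?B)"
    by (simp add: urn_step_alt map_pmf_comp)
  also have "\<dots> = map_pmf (\<lambda>i. h (i < k)) (pmf_of_multiset ?B)"
  proof (rule map_pmf_cong[OF refl])
    fix i assume "i \<in> set_pmf (pmf_of_multiset ?B)"
    with ne have i: "i < length xs" by (simp add: in_balls)
    show "g1 k (new_st l n xs i) = h (i < k)"
      using i k le imm by (auto simp: g1_def h_def new_st_sum new_st_Mk)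
  qed
  also have "\<dots> = map_pmf h (map_pmf (\<lambda>i. i < k) (pmf_of_multiset ?B))"
    by (simp add: map_pmf_comp)
  also have "\<dots> = map_pmf h (pmf_of_multiset (replicate_mset ?w True + replicate_mset ?b False))"
    using ne by (simp add: pmf_map_multiset image_c2)
  also have "replicate_mset ?w True + replicate_mset ?b False = replicate_mset ?b False + replicate_mset ?w True"
    by (rule add.commute)
  also have "map_pmf h (pmf_of_multiset (replicate_mset ?b False + replicate_mset ?w True)) = two_step imm j (g1 k xs)"
    unfolding two_step_def h_def g1_def by simp
  finally show ?thesis .
qed

definition F3 :: "nat \<Rightarrow> nat list \<Rightarrow> nat \<times> nat \<times> nat" where
  "F3 k xs = (sum_list xs - Mk (Suc k) xs, Mk (Suc k) xs, Mk k xs)"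
definition F2 :: "nat \<Rightarrow> nat list \<Rightarrow> nat \<times> nat" where
  "F2 k xs = (sum_list xs - Mk (Suc k) xs, Mk (Suc k) xs)"
definition Cm :: "nat \<Rightarrow> nat \<Rightarrow> bool pmf" where
  "Cm r M = pmf_of_multiset (replicate_mset M True + replicate_mset r False)"
definition T3 :: "nat \<Rightarrow> nat \<Rightarrow> nat \<Rightarrow> nat \<Rightarrow> (nat \<times> nat \<times> nat) pmf" where
  "T3 e r M a = bind_pmf (Cm r M) (\<lambda>c. if c then map_pmf (\<lambda>a'. (r + e, Suc M, a'))
        (map_pmf snd (two_step (\<lambda>_. False) 0 (M - a, a))) else return_pmf (Suc r + e, M, a))"

lemma TR3:
  assumes k: "Suc k \<le> length xs" and pos: "sum_list xs > 0"
  shows "map_pmf (F3 k) (urn_step l n xs) = T3 (if l dvd n then 1 else 0)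
            (sum_list xs - Mk (Suc k) xs) (Mk (Suc k) xs) (Mk k xs)"
proof -
  let ?B = "balls_mset xs"
  define e where "e = (if l dvd n then 1 else 0::nat)"
  define r where "r = sum_list xs - Mk (Suc k) xs"
  define M where "M = Mk (Suc k) xs"
  define a where "a = Mk k xs"
  define \<phi> where "\<phi> = (\<lambda>c::nat. if c = 0 then (r + e, Suc M, Suc a) else if c = 1 then (r + e, Suc M, a) else (Suc r + e, M, a))"
  define Y where "Y = replicate_mset a 0 + replicate_mset (M - a) 1 + replicate_mset r (2::nat)"
  have ne: "?B \<noteq> {#}" using balls_ne[OF pos] .
  have aM: "a \<le> M" unfolding a_def M_def by (rule Mk_mono) simp
  have Ms: "M \<le> sum_list xs" unfolding M_def by (rule Mk_le_sum)
  have sumeq: "M + r = sum_list xs" using Ms unfolding r_def M_def by simp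
  have "map_pmf (F3 k) (urn_step l n xs) = map_pmf (\<lambda>i. F3 k (new_st l n xs i)) (pmf_of_multiset ?B)"
    by (simp add: urn_step_alt map_pmf_comp)
  also have "\<dots> = map_pmf (\<lambda>i. \<phi> (c3 k i)) (pmf_of_multiset ?B)"
  proof (rule map_pmf_cong[OF refl])
    fix i assume "i \<in> set_pmf (pmf_of_multiset ?B)"
    with ne have i: "i < length xs" by (simp add: in_balls)
    have k': "k \<le> length xs" using k by simp
    show "F3 k (new_st l n xs i) = \<phi> (c3 k i)"
      using i k k' Ms aM by (auto simp: F3_def \<phi>_def c3_def new_st_sum new_st_Mk r_def M_def a_def e_def)
  qed
  also have "\<dots> = map_pmf \<phi> (map_pmf (c3 k) (pmf_of_multiset ?B))"
    by (simp add: map_pmf_comp)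
  also have "\<dots> = map_pmf \<phi> (pmf_of_multiset Y)"
    using ne by (simp add: pmf_map_multiset image_c3 Y_def a_def M_def r_def)
  also have neY: "Y \<noteq> {#}" using pos sumeq aM by (auto simp: Y_def)
  have imY: "image_mset (\<lambda>c. c < 2) Y = replicate_mset M True + replicate_mset r False"
    using aM by (auto simp: Y_def multiset_eq_iff)
  have "map_pmf \<phi> (pmf_of_multiset Y) = bind_pmf (Cm r M) (\<lambda>b. map_pmf \<phi> (pmf_of_multiset (filter_mset (\<lambda>c. (c < 2) = b) Y)))"
    by (subst pmf_of_multiset_split[OF neY, of "\<lambda>c. c < 2"]) (simp add: map_bind_pmf imY Cm_def)
  also have "\<dots> = T3 e r M a" unfolding T3_def
  proof (rule bind_pmf_cong[OF refl])
    fix b assume b: "b \<in> set_pmf (Cm r M)"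
    have neC: "replicate_mset M True + replicate_mset r False \<noteq> {#}" using pos sumeq by auto
    from b neC have bM: "b \<Longrightarrow> M > 0" and br: "\<not> b \<Longrightarrow> r > 0" by (auto simp: Cm_def split: if_splits)
    show "map_pmf \<phi> (pmf_of_multiset (filter_mset (\<lambda>c. (c < 2) = b) Y)) =
      (if b then map_pmf (\<lambda>a'. (r + e, Suc M, a')) (map_pmf snd (two_step (\<lambda>_. False) 0 (M - a, a)))
       else return_pmf (Suc r + e, M, a))"
    proof (cases b)
      case True
      have f: "filter_mset (\<lambda>c. (c<2) = b) Y = replicate_mset a 0 + replicate_mset (M - a) 1"
        using True by (auto simp: Y_def multiset_eq_iff)
      have ne1: "replicate_mset a 0 + replicate_mset (M - a) (1::nat) \<noteq> {#}" using bM True aM by auto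
      have ne2: "replicate_mset (M - a) False + replicate_mset a True \<noteq> {#}" using bM True aM by auto
      have "map_pmf (\<lambda>a'. (r + e, Suc M, a')) (map_pmf snd (two_step (\<lambda>_. False) 0 (M - a, a)))
          = map_pmf (\<lambda>w. (r + e, Suc M, if w then Suc a else a))
              (pmf_of_multiset (replicate_mset (M - a) False + replicate_mset a True))"
        by (simp add: two_step_def map_pmf_comp) (rule map_pmf_cong; auto)
      also have "\<dots> = pmf_of_multiset (image_mset (\<lambda>w. (r + e, Suc M, if w then Suc a else a))
              (replicate_mset (M - a) False + replicate_mset a True))"
        by (rule pmf_map_multiset[OF ne2])
      also have "image_mset (\<lambda>w. (r + e, Suc M, if w then Suc a else a))
              (replicate_mset (M - a) False + replicate_mset a True)
              = image_mset \<phi> (replicate_mset a 0 + replicate_mset (M - a) 1)"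
        by (simp add: \<phi>_def add.commute)
      also have "pmf_of_multiset \<dots> = map_pmf \<phi> (pmf_of_multiset (replicate_mset a 0 + replicate_mset (M - a) 1))"
        by (rule pmf_map_multiset[OF ne1, symmetric])
      finally show ?thesis using True f by simp
    next
      case False
      have f: "filter_mset (\<lambda>c. (c<2) = b) Y = replicate_mset r 2"
        using False by (auto simp: Y_def multiset_eq_iff)
      then show ?thesis using False br by (simp add: pmf_of_multiset_replicate \<phi>_def)
    qed
  qed
  finally show ?thesis by (simp add: e_def r_def M_def a_def)
qed

lemma two_urn_sum: "(x, y) \<in> set_pmf (two_urn (\<lambda>_. False) b w m) \<Longrightarrow> x + y = b + w + m"
  by (induction m arbitrary: x y) (auto simp: two_step_def split: if_splits)

lemma two_step_F: "two_step (\<lambda>_. False) j x = two_step (\<lambda>_. False) 0 x"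
  by (simp add: two_step_def)

lemma Pclas_0: "Pclas b w 0 = return_pmf w" by (simp add: Pclas_def)

lemma Pclas_Suc: "Pclas b w (Suc m) = bind_pmf (Pclas b w m)
     (\<lambda>a. map_pmf snd (two_step (\<lambda>_. False) 0 (b + w + m - a, a)))"
proof -
  have "Pclas b w (Suc m) = bind_pmf (two_urn (\<lambda>_. False) b w m) (\<lambda>x. map_pmf snd (two_step (\<lambda>_. False) (Suc m) x))"
    by (simp add: Pclas_def map_bind_pmf)
  also have "\<dots> = bind_pmf (two_urn (\<lambda>_. False) b w m) (\<lambda>x. map_pmf snd (two_step (\<lambda>_. False) 0 (b + w + m - snd x, snd x)))"
  proof (rule bind_pmf_cong[OF refl])
    fix x assume "x \<in> set_pmf (two_urn (\<lambda>_. False) b w m)"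
    then have "fst x + snd x = b + w + m" using two_urn_sum[of "fst x" "snd x"] by simp
    then have "x = (b + w + m - snd x, snd x)" by (cases x) auto
    then show "map_pmf snd (two_step (\<lambda>_. False) (Suc m) x) = map_pmf snd (two_step (\<lambda>_. False) 0 (b + w + m - snd x, snd x))"
      by (metis two_step_F)
  qed
  also have "\<dots> = bind_pmf (Pclas b w m) (\<lambda>a. map_pmf snd (two_step (\<lambda>_. False) 0 (b + w + m - a, a)))"
    by (simp add: Pclas_def bind_map_pmf)
  finally show ?thesis .
qed

lemma H_lemma:
  assumes "M0 \<le> M" "b0 + w0 = M0"
  shows "bind_pmf (Pclas b0 w0 (M - M0)) (\<lambda>a. T3 e r M a) =
    bind_pmf (Cm r M) (\<lambda>c. if c then map_pmf (\<lambda>a. (r + e, Suc M, a)) (Pclas b0 w0 (Suc M - M0))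
                                else map_pmf (\<lambda>a. (Suc r + e, M, a)) (Pclas b0 w0 (M - M0)))"
proof -
  have "bind_pmf (Pclas b0 w0 (M - M0)) (\<lambda>a. T3 e r M a) = bind_pmf (Cm r M) (\<lambda>c. bind_pmf (Pclas b0 w0 (M - M0))
     (\<lambda>a. if c then map_pmf (\<lambda>a'. (r + e, Suc M, a')) (map_pmf snd (two_step (\<lambda>_. False) 0 (M - a, a)))
          else return_pmf (Suc r + e, M, a)))"
    unfolding T3_def by (rule bind_commute_pmf)
  also have "\<dots> = bind_pmf (Cm r M) (\<lambda>c. if c then map_pmf (\<lambda>a. (r + e, Suc M, a)) (Pclas b0 w0 (Suc M - M0))
                                else map_pmf (\<lambda>a. (Suc r + e, M, a)) (Pclas b0 w0 (M - M0)))"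
  proof (rule bind_pmf_cong[OF refl])
    fix c :: bool
    have e1: "Suc M - M0 = Suc (M - M0)" and e2: "b0 + w0 + (M - M0) = M" using assms by auto
    show "bind_pmf (Pclas b0 w0 (M - M0))
     (\<lambda>a. if c then map_pmf (\<lambda>a'. (r + e, Suc M, a')) (map_pmf snd (two_step (\<lambda>_. False) 0 (M - a, a)))
          else return_pmf (Suc r + e, M, a)) = (if c then map_pmf (\<lambda>a. (r + e, Suc M, a)) (Pclas b0 w0 (Suc M - M0))
                                else map_pmf (\<lambda>a. (Suc r + e, M, a)) (Pclas b0 w0 (M - M0)))"
    proof (cases c)
      case True
      then show ?thesis unfolding e1 Pclas_Suc e2 by (simp add: map_bind_pmf)
    next
      case False
      then show ?thesis by (simp add: map_pmf_def)
    qed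
  qed
  finally show ?thesis .
qed

definition T2 :: "nat \<Rightarrow> nat \<Rightarrow> nat \<Rightarrow> (nat \<times> nat) pmf" where
  "T2 e r M = map_pmf (\<lambda>c. if c then (r + e, Suc M) else (Suc r + e, M)) (Cm r M)"

lemma T3_T2: "map_pmf (\<lambda>x. (fst x, fst (snd x))) (T3 e r M a) = T2 e r M"
proof -
  have "T2 e r M = bind_pmf (Cm r M) (\<lambda>c. return_pmf (if c then (r + e, Suc M) else (Suc r + e, M)))"
    by (simp add: T2_def map_pmf_def)
  also have "\<dots> = map_pmf (\<lambda>x. (fst x, fst (snd x))) (T3 e r M a)"
    unfolding T3_def map_bind_pmf
    by (rule bind_pmf_cong[OF refl]) (simp add: map_pmf_comp)
  finally show ?thesis by simp
qed

lemma TR2: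
  assumes k: "Suc k \<le> length xs" and pos: "sum_list xs > 0"
  shows "map_pmf (F2 k) (urn_step l n xs) = T2 (if l dvd n then 1 else 0)
            (sum_list xs - Mk (Suc k) xs) (Mk (Suc k) xs)"
proof -
  have "map_pmf (F2 k) (urn_step l n xs) = map_pmf (\<lambda>x. (fst x, fst (snd x))) (map_pmf (F3 k) (urn_step l n xs))"
    by (simp add: map_pmf_comp F2_def[abs_def] F3_def)
  then show ?thesis by (simp add: TR3[OF k pos] T3_T2)
qed



definition Kd :: "nat \<Rightarrow> nat \<Rightarrow> nat \<Rightarrow> nat \<times> nat \<Rightarrow> (nat \<times> nat \<times> nat) pmf" where
  "Kd b0 w0 M0 x = map_pmf (\<lambda>a. (fst x, snd x, a)) (Pclas b0 w0 (snd x - M0))"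

lemma cond_induct:
  assumes c0: "sum_list c0 > 0"
    and base: "map_pmf (F3 k) (urn l c0 n0) = bind_pmf (map_pmf (F2 k) (urn l c0 n0)) (Kd b0 w0 M0)"
    and sup: "\<And>n xs. n0 \<le> n \<Longrightarrow> xs \<in> set_pmf (urn l c0 n) \<Longrightarrow> Suc k \<le> length xs \<and> M0 \<le> Mk (Suc k) xs"
    and bw: "b0 + w0 = M0"
  shows "n0 \<le> n \<Longrightarrow> map_pmf (F3 k) (urn l c0 n) = bind_pmf (map_pmf (F2 k) (urn l c0 n)) (Kd b0 w0 M0)"
proof (induction n)
  case 0 then show ?case using base by simp
next
  case (Suc n)
  show ?case
  proof (cases "n0 = Suc n")
    case True then show ?thesis using base by simp
  next
    case False
    with Suc.prems have n0n: "n0 \<le> n" by simp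
    define e where "e = (if l dvd Suc n then 1 else 0::nat)"
    define H where "H = (\<lambda>x::nat\<times>nat. bind_pmf (Cm (fst x) (snd x)) (\<lambda>c. if c then Kd b0 w0 M0 (fst x + e, Suc (snd x))
                     else Kd b0 w0 M0 (Suc (fst x) + e, snd x)))"
    have step3: "map_pmf (F3 k) (urn l c0 (Suc n)) = bind_pmf (map_pmf (F3 k) (urn l c0 n)) (\<lambda>x. T3 e (fst x) (fst (snd x)) (snd (snd x)))"
    proof -
      have "map_pmf (F3 k) (urn l c0 (Suc n)) = bind_pmf (urn l c0 n) (\<lambda>xs. map_pmf (F3 k) (urn_step l (Suc n) xs))"
        by (simp add: map_bind_pmf)
      also have "\<dots> = bind_pmf (urn l c0 n) (\<lambda>xs. (\<lambda>x. T3 e (fst x) (fst (snd x)) (snd (snd x))) (F3 k xs))"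
      proof (rule bind_pmf_cong[OF refl])
        fix xs assume xs: "xs \<in> set_pmf (urn l c0 n)"
        show "map_pmf (F3 k) (urn_step l (Suc n) xs) = (\<lambda>x. T3 e (fst x) (fst (snd x)) (snd (snd x))) (F3 k xs)"
          using TR3[of k xs l "Suc n"] sup[OF n0n xs] urn_pos[OF c0 xs] by (simp add: F3_def e_def)
      qed
      also have "\<dots> = bind_pmf (map_pmf (F3 k) (urn l c0 n)) (\<lambda>x. T3 e (fst x) (fst (snd x)) (snd (snd x)))"
        by (simp add: bind_map_pmf)
      finally show ?thesis .
    qed
    have step2: "map_pmf (F2 k) (urn l c0 (Suc n)) = bind_pmf (map_pmf (F2 k) (urn l c0 n)) (\<lambda>x. T2 e (fst x) (snd x))"
    proof -
      have "map_pmf (F2 k) (urn l c0 (Suc n)) = bind_pmf (urn l c0 n) (\<lambda>xs. map_pmf (F2 k) (urn_step l (Suc n) xs))"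
        by (simp add: map_bind_pmf)
      also have "\<dots> = bind_pmf (urn l c0 n) (\<lambda>xs. (\<lambda>x. T2 e (fst x) (snd x)) (F2 k xs))"
      proof (rule bind_pmf_cong[OF refl])
        fix xs assume xs: "xs \<in> set_pmf (urn l c0 n)"
        show "map_pmf (F2 k) (urn_step l (Suc n) xs) = (\<lambda>x. T2 e (fst x) (snd x)) (F2 k xs)"
          using TR2[of k xs l "Suc n"] sup[OF n0n xs] urn_pos[OF c0 xs] by (simp add: F2_def e_def)
      qed
      also have "\<dots> = bind_pmf (map_pmf (F2 k) (urn l c0 n)) (\<lambda>x. T2 e (fst x) (snd x))"
        by (simp add: bind_map_pmf)
      finally show ?thesis .
    qed
    have "map_pmf (F3 k) (urn l c0 (Suc n)) = bind_pmf (bind_pmf (map_pmf (F2 k) (urn l c0 n)) (Kd b0 w0 M0))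
           (\<lambda>x. T3 e (fst x) (fst (snd x)) (snd (snd x)))"
      using step3 Suc.IH[OF n0n] by simp
    also have "\<dots> = bind_pmf (map_pmf (F2 k) (urn l c0 n)) H"
      unfolding bind_assoc_pmf
    proof (rule bind_pmf_cong[OF refl])
      fix x assume x: "x \<in> set_pmf (map_pmf (F2 k) (urn l c0 n))"
      then obtain xs where "xs \<in> set_pmf (urn l c0 n)" "x = F2 k xs" by auto
      then have M0: "M0 \<le> snd x" using sup[OF n0n] by (simp add: F2_def)
      show "bind_pmf (Kd b0 w0 M0 x) (\<lambda>x. T3 e (fst x) (fst (snd x)) (snd (snd x))) = H x"
      proof -
        have "bind_pmf (Kd b0 w0 M0 x) (\<lambda>x. T3 e (fst x) (fst (snd x)) (snd (snd x)))
             = bind_pmf (Pclas b0 w0 (snd x - M0)) (\<lambda>a. T3 e (fst x) (snd x) a)"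
          by (simp add: Kd_def bind_map_pmf)
        also have "\<dots> = bind_pmf (Cm (fst x) (snd x)) (\<lambda>c. if c then map_pmf (\<lambda>a. (fst x + e, Suc (snd x), a)) (Pclas b0 w0 (Suc (snd x) - M0))
                                else map_pmf (\<lambda>a. (Suc (fst x) + e, snd x, a)) (Pclas b0 w0 (snd x - M0)))"
          by (rule H_lemma[OF M0 bw])
        also have "\<dots> = H x" unfolding H_def Kd_def fst_conv snd_conv ..
        finally show ?thesis .
      qed
    qed
    also have "\<dots> = bind_pmf (bind_pmf (map_pmf (F2 k) (urn l c0 n)) (\<lambda>x. T2 e (fst x) (snd x))) (Kd b0 w0 M0)"
      unfolding bind_assoc_pmf
    proof (rule bind_pmf_cong[OF refl])
      fix x :: "nat \<times> nat"
      show "H x = bind_pmf (T2 e (fst x) (snd x)) (Kd b0 w0 M0)"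
        unfolding H_def T2_def bind_map_pmf by (rule bind_pmf_cong[OF refl]) simp
    qed
    also have "\<dots> = bind_pmf (map_pmf (F2 k) (urn l c0 (Suc n))) (Kd b0 w0 M0)"
      using step2 by simp
    finally show ?thesis .
  qed
qed

lemma cond_from_joint:
  assumes "map_pmf (F3 k) P = bind_pmf (map_pmf (F2 k) P) (Kd b0 w0 M0)"
  shows "cond_law P (Mk (Suc k)) (Mk k) (\<lambda>M. Pclas b0 w0 (M - M0))"
proof -
  have "map_pmf (\<lambda>\<omega>. (Mk (Suc k) \<omega>, Mk k \<omega>)) P = map_pmf (\<lambda>x. (fst (snd x), snd (snd x))) (map_pmf (F3 k) P)"
    by (simp add: map_pmf_comp F3_def)
  also have "\<dots> = bind_pmf (map_pmf (F2 k) P) (\<lambda>x. map_pmf (Pair (snd x)) (Pclas b0 w0 (snd x - M0)))"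
    by (simp add: assms map_bind_pmf Kd_def map_pmf_comp)
  also have "\<dots> = bind_pmf (map_pmf (Mk (Suc k)) P) (\<lambda>x. map_pmf (Pair x) (Pclas b0 w0 (x - M0)))"
    by (simp add: bind_map_pmf F2_def)
  finally show ?thesis unfolding cond_law_def .
qed

lemma imm_induct:
  assumes c0: "sum_list c0 > 0" and dv: "l dvd n0"
    and base: "map_pmf (g1 k) (urn l c0 n0) = return_pmf (1, W)"
    and sup: "\<And>n xs. n0 \<le> n \<Longrightarrow> xs \<in> set_pmf (urn l c0 n) \<Longrightarrow> k \<le> length xs"
  shows "map_pmf (g1 k) (urn l c0 (n0 + j)) = two_urn (\<lambda>j. l dvd j) 1 W j"
proof (induction j)
  case 0 then show ?case using base by simp
next
  case (Suc j)
  have "map_pmf (g1 k) (urn l c0 (n0 + Suc j)) = bind_pmf (urn l c0 (n0 + j)) (\<lambda>xs. map_pmf (g1 k) (urn_step l (Suc (n0 + j)) xs))"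
    by (simp add: map_bind_pmf)
  also have "\<dots> = bind_pmf (urn l c0 (n0+j)) (\<lambda>xs. two_step (\<lambda>j. l dvd j) (Suc j) (g1 k xs))"
  proof (rule bind_pmf_cong[OF refl])
    fix xs assume xs: "xs \<in> set_pmf (urn l c0 (n0 + j))"
    have "(l dvd Suc j) = (l dvd Suc (n0 + j))" using dv by (metis add_Suc_right dvd_add_right_iff)
    then show "map_pmf (g1 k) (urn_step l (Suc (n0 + j)) xs) = two_step (\<lambda>j. l dvd j) (Suc j) (g1 k xs)"
      using TR1[of k xs "\<lambda>j. l dvd j" "Suc j" l "Suc (n0+j)"] sup[OF _ xs] urn_pos[OF c0 xs] by simp
  qed
  also have "\<dots> = bind_pmf (map_pmf (g1 k) (urn l c0 (n0+j))) (two_step (\<lambda>j. l dvd j) (Suc j))"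
    by (simp add: bind_map_pmf)
  also have "\<dots> = two_urn (\<lambda>j. l dvd j) 1 W (Suc j)" using Suc.IH by simp
  finally show ?case .
qed



lemma mcum_Mk: "mcum c0 j = Mk j c0" by (simp add: mcum_def Mk_def)

theorem lemma3p1:
  fixes l s k n :: nat and c0 :: "nat list"
  assumes "l \<ge> 1"
    and "length c0 = s" and "s \<ge> 1"
    and "\<forall>x\<in>set c0. x \<ge> 1"
  shows
   "(s \<le> k \<and> l * (k - s + 1) \<le> n \<longrightarrow>
       map_pmf (Mk k) (urn l c0 n)
       = Pimm l 1 (mcum c0 s + l * (k - s + 1) + (k - s)) (n - l * (k - s + 1)))
    \<and> (1 \<le> k \<and> k < s \<longrightarrow>
       cond_law (urn l c0 n) (Mk (k + 1)) (Mk k)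
         (\<lambda>M. Pclas (mcum c0 (k + 1) - mcum c0 k) (mcum c0 k) (M - mcum c0 (k + 1))))
    \<and> (s \<le> k \<and> l * (k - s + 1) \<le> n \<longrightarrow>
       cond_law (urn l c0 n) (Mk (k + 1)) (Mk k)
         (\<lambda>M. Pclas 1 (mcum c0 s + l * (k - s + 1) + (k - s))
                      (M - mcum c0 s - (l + 1) * (k - s + 1))))"
proof -
  note l = assms(1) and len = assms(2)
  have "c0 \<noteq> []" using assms(2,3) by auto
  then obtain x where x: "x \<in> set c0" by (cases c0) auto
  have c0: "sum_list c0 > 0"
    using member_le_sum_list[OF x] assms(4) x by fastforce
  define S where "S = sum_list c0"
  have mS: "mcum c0 s = S" using len by (simp add: mcum_def S_def)
  have inv: "\<And>n xs. xs \<in> set_pmf (urn l c0 n) \<Longrightarrow> length xs = s + n div l \<and> sum_list xs = S + n + n div l"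
    using urn_inv[OF c0] len S_def by blast
  have partA: "map_pmf (Mk k) (urn l c0 n) = Pimm l 1 (mcum c0 s + l * (k - s + 1) + (k - s)) (n - l * (k - s + 1))
       \<and> cond_law (urn l c0 n) (Mk (k + 1)) (Mk k)
         (\<lambda>M. Pclas 1 (mcum c0 s + l * (k - s + 1) + (k - s)) (M - mcum c0 s - (l + 1) * (k - s + 1)))"
    if sk: "s \<le> k" and nn: "l * (k - s + 1) \<le> n"
  proof -
    define p where "p = k - s + 1"
    define n0 where "n0 = l * p"
    define W where "W = S + n0 + (k - s)"
    define T where "T = S + n0 + p"
    have p1: "p \<ge> 1" by (simp add: p_def)
    have n0div: "n0 div l = p" using l by (simp add: n0_def)
    have n0pos: "n0 = Suc (n0 - 1)" using l p1 unfolding n0_def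
      by (metis Suc_diff_1 le_less_trans less_numeral_extra(1) nat_0_less_mult_iff order_less_le_trans)
    have dv: "l dvd n0" by (simp add: n0_def)
    have TW: "T = Suc W" "1 + W = T" using sk by (simp_all add: T_def W_def p_def)
    have nn0: "n0 \<le> n" using nn by (simp add: n0_def p_def)
    have base_st: "g1 k ys = (1, W) \<and> F3 k ys = (0, T, W) \<and> F2 k ys = (0, T) \<and> Mk (Suc k) ys = T"
      if ys: "ys \<in> set_pmf (urn l c0 n0)" for ys
    proof -
      from ys n0pos have "ys \<in> set_pmf (urn l c0 (Suc (n0 - 1)))" by simp
      from urn_last[OF c0 _ this] dv n0pos obtain zs where zs: "ys = zs @ [1]" by (metis)
      from inv[OF ys] n0div have ly: "length ys = s + p" and sy: "sum_list ys = T"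
        by (simp_all add: T_def)
      have lz: "length zs = k" using ly zs sk by (simp add: p_def)
      have "Mk k ys = sum_list zs" using lz zs by (simp add: Mk_snoc Mk_all)
      moreover have "sum_list ys = sum_list zs + 1" using zs by simp
      moreover have "Mk (Suc k) ys = sum_list ys" using ly sk by (simp add: Mk_all p_def)
      ultimately show ?thesis using sy TW by (simp add: g1_def F3_def F2_def)
    qed
    have sup1: "Suc k \<le> length xs \<and> T \<le> Mk (Suc k) xs" if "n0 \<le> m" "xs \<in> set_pmf (urn l c0 m)" for m xs
    proof
      have "n0 div l \<le> m div l" using that(1) by (rule div_le_mono)
      then show "Suc k \<le> length xs" using inv[OF that(2)] n0div sk by (simp add: p_def)
      from urn_mono[OF c0 that] obtain ys where "ys \<in> set_pmf (urn l c0 n0)" "\<forall>j. Mk j ys \<le> Mk j xs" by blast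
      then show "T \<le> Mk (Suc k) xs" using base_st by metis
    qed
    have b1: "map_pmf (g1 k) (urn l c0 n0) = return_pmf (1, W)"
    proof -
      have "map_pmf (g1 k) (urn l c0 n0) = map_pmf (\<lambda>_. (1, W)) (urn l c0 n0)"
        by (rule map_pmf_cong[OF refl]) (simp add: base_st)
      then show ?thesis by simp
    qed
    have imm: "map_pmf (g1 k) (urn l c0 (n0 + j)) = two_urn (\<lambda>j. l dvd j) 1 W j" for j
      by (rule imm_induct[OF c0 dv b1]) (meson sup1 Suc_leD)
    have P1: "map_pmf (Mk k) (urn l c0 n) = Pimm l 1 W (n - n0)"
    proof -
      have "Pimm l 1 W (n - n0) = map_pmf snd (map_pmf (g1 k) (urn l c0 (n0 + (n - n0))))"
        by (simp add: Pimm_def imm)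
      also have "\<dots> = map_pmf (Mk k) (urn l c0 n)" using nn0 by (simp add: map_pmf_comp g1_def)
      finally show ?thesis by simp
    qed
    have b3: "map_pmf (F3 k) (urn l c0 n0) = bind_pmf (map_pmf (F2 k) (urn l c0 n0)) (Kd 1 W T)"
    proof -
      have "map_pmf (F3 k) (urn l c0 n0) = map_pmf (\<lambda>_. (0, T, W)) (urn l c0 n0)"
        by (rule map_pmf_cong[OF refl]) (simp add: base_st)
      moreover have "map_pmf (F2 k) (urn l c0 n0) = map_pmf (\<lambda>_. (0, T)) (urn l c0 n0)"
        by (rule map_pmf_cong[OF refl]) (simp add: base_st)
      ultimately show ?thesis by (simp add: Kd_def Pclas_0 bind_return_pmf)
    qed
    have J: "map_pmf (F3 k) (urn l c0 n) = bind_pmf (map_pmf (F2 k) (urn l c0 n)) (Kd 1 W T)"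
      by (rule cond_induct[OF c0 b3 _ TW(2) nn0]) (use sup1 in auto)
    have C: "cond_law (urn l c0 n) (Mk (Suc k)) (Mk k) (\<lambda>M. Pclas 1 W (M - T))"
      by (rule cond_from_joint[OF J])
    have eqf: "(\<lambda>M. Pclas 1 (mcum c0 s + l * (k - s + 1) + (k - s)) (M - mcum c0 s - (l + 1) * (k - s + 1)))
             = (\<lambda>M. Pclas 1 W (M - T))"
    proof -
      have e1: "mcum c0 s + l * (k - s + 1) + (k - s) = W" by (simp add: mS W_def n0_def p_def)
      have e2: "M - mcum c0 s - (l + 1) * (k - s + 1) = M - T" for M
      proof -
        have "M - mcum c0 s - (l + 1) * (k - s + 1) = M - S - (l * p + p)"
          unfolding mS p_def[symmetric] by (simp add: algebra_simps)
        also have "\<dots> = M - T" by (simp add: T_def n0_def)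
        finally show ?thesis .
      qed
      show ?thesis using e1 e2 by simp
    qed
    show ?thesis using P1 C eqf by (simp add: mS W_def n0_def p_def)
  qed
  have partB: "cond_law (urn l c0 n) (Mk (k + 1)) (Mk k)
         (\<lambda>M. Pclas (mcum c0 (k + 1) - mcum c0 k) (mcum c0 k) (M - mcum c0 (k + 1)))"
    if k1: "1 \<le> k" and ks: "k < s"
  proof -
    define M0 where "M0 = Mk (Suc k) c0"
    define w0 where "w0 = Mk k c0"
    have wM: "w0 \<le> M0" unfolding w0_def M0_def by (rule Mk_mono) simp
    have b3: "map_pmf (F3 k) (urn l c0 0) = bind_pmf (map_pmf (F2 k) (urn l c0 0)) (Kd (M0 - w0) w0 M0)"
      by (simp add: F3_def F2_def Kd_def Pclas_0 M0_def w0_def bind_return_pmf)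
    have sup: "Suc k \<le> length xs \<and> M0 \<le> Mk (Suc k) xs" if "0 \<le> m" "xs \<in> set_pmf (urn l c0 m)" for m xs
    proof
      show "Suc k \<le> length xs" using inv[OF that(2)] ks by simp
      from urn_mono[OF c0 that] show "M0 \<le> Mk (Suc k) xs" by (auto simp: M0_def)
    qed
    have J: "map_pmf (F3 k) (urn l c0 n) = bind_pmf (map_pmf (F2 k) (urn l c0 n)) (Kd (M0 - w0) w0 M0)"
      by (rule cond_induct[OF c0 b3 sup]) (use wM in auto)
    show ?thesis using cond_from_joint[OF J] by (simp add: mcum_Mk M0_def w0_def)
  qed
  show ?thesis using partA partB by blast
qed


end
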